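(* Let $\mathcal G=(G,\pi_G,c_G)$ and $\mathcal H=(H,\pi_H,c_H)$ be in $\mathrm{LiftPMod}(\mathbb B,\mathcal C)$, and let $\varphi:\mathcal G\to\mathcal H$ be a morphism of lifted perceptrons. Then for all $w_G\in\mathrm{Param}(\mathcal G)$ and $w_H\in\mathrm{Param}(\mathcal H)$, if $w_G=\varphi^*w_H$ (i.e. $(w_G)_e=(w_H)_{\varphi(e)}$ for all $e\in E_G$), then $\mathcal F_{\mathcal G}(w_G,\cdot)=\varphi^*\circ\mathcal F_{\mathcal H}(w_H,\cdot)$, i.e. $[\mathcal F_{\mathcal G}(w_G,x)]_v=[\mathcal F_{\mathcal H}(w_H,x)]_{\varphi(v)}$ for every input $x\in\prod_{u\in\mathcal C}\mathcal Y_{p_{\mathcal C}(u)}$ and every $v\in V_G$.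
   Context: Graphs: $G=(V,E)$, $V$ finite, $E\subseteq V\times V$; $G(-,v)=\{u:(u,v)\in E\}$. A homomorphism $\varphi:G\to H$ maps vertices with $(u,v)\in E_G\Rightarrow(\varphi(u),\varphi(v))\in E_H$, and acts on edges by $\varphi(u,v)=(\varphi(u),\varphi(v))$. A fibration is a homomorphism such that for each $v\in V_G$ the restriction $G(-,v)\to H(-,\varphi(v))$ is a bijection. A Euclidean bundle over a finite set is a family of finite-dimensional real inner product spaces indexed by it. A perceptron module over a finite DAG $B=(V_B,E_B)$ is $\mathbb B=((I_B,T_B),(\mathcal Y,\mathcal Z,\mathcal W),(M,\sigma))$: $I_B\subseteq V_B$ (vertices without parents), $T_B\subseteq V_B$, bundles $\mathcal Y$ over $V_B$, $\mathcal Z,\mathcal W$ over $E_B$, maps $M_{(u,v)}:\mathcal W_{(u,v)}\times\mathcal Y_u\to\mathcal Z_{(u,v)}$ and $\sigma_v:\prod_{u\in B(-,v)}\mathcal Z_{(u,v)}\to\mathcal Y_v$ for $v\notin I_B$. Fix such $\mathbb B$, a finite set $\mathcal C$ and $p_{\mathcal C}:\mathcal C\to I_B$. $\mathrm{LiftPMod}(\mathbb B,\mathcal C)$: triples $(G,\pi,c)$ with $G=(V_G,E_G)$ a graph, $\pi:G\to B$ a homomorphism, $c:\pi^{-1}(I_B)\to\mathcal C$ injective with $p_{\mathcal C}\circ c=\pi$ on $\pi^{-1}(I_B)$. $\mathrm{Param}(\mathcal G)=\prod_{e\in E_G}\mathcal W_{\pi(e)}$. Forward function: $\mathcal F_{\mathcal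 G}(w,x)=f\in\prod_{v\in V_G}\mathcal Y_{\pi(v)}$ with $f_v=x_{c(v)}$ if $\pi(v)\in I_B$, and otherwise $f_v=\sigma_{\pi(v)}((\sum_{u\in G(-,v)\cap\pi^{-1}(a)}M_{\pi(u,v)}(w_{(u,v)},f_u))_{a\in B(-,\pi(v))})$, defined inductively (G is acyclic). A morphism of lifted perceptrons $\varphi:(G,\pi_G,c_G)\to(H,\pi_H,c_H)$ is a fibration $\varphi:G\to H$ with $\pi_G=\pi_H\circ\varphi$ and $c_G=c_H\circ\varphi$ (on input vertices). *)

theory Defs
  imports "HOL-Analysis.Analysis"
begin

definition is_graph :: "'a set \<Rightarrow> ('a \<times> 'a) set \<Rightarrow> bool" where
  "is_graph V E \<longleftrightarrow> finite V \<and> E \<subseteq> V \<times> V"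

definition parents :: "('a \<times> 'a) set \<Rightarrow> 'a \<Rightarrow> 'a set" where
  "parents E v = {u. (u, v) \<in> E}"

definition is_dag :: "'a set \<Rightarrow> ('a \<times> 'a) set \<Rightarrow> bool" where
  "is_dag V E \<longleftrightarrow> is_graph V E \<and> acyclic E"

definition graph_hom ::
  "'a set \<Rightarrow> ('a \<times> 'a) set \<Rightarrow> 'b set \<Rightarrow> ('b \<times> 'b) set \<Rightarrow> ('a \<Rightarrow> 'b) \<Rightarrow> bool" where
  "graph_hom VG EG VH EH \<phi> \<longleftrightarrow>
     (\<forall>v\<in>VG. \<phi> v \<in> VH) \<and> (\<forall>u v. (u, v) \<in> EG \<longrightarrow> (\<phi> u, \<phi> v) \<in> EH)"

definition fibration ::
  "'a set \<Rightarrow> ('a \<times> 'a) set \<Rightarrow> 'b set \<Rightarrow> ('b \<times> 'b) set \<Rightarrow> ('a \<Rightarrow> 'b) \<Rightarrow> bool" where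
  "fibration VG EG VH EH \<phi> \<longleftrightarrow> graph_hom VG EG VH EH \<phi> \<and>
     (\<forall>v\<in>VG. bij_betw \<phi> (parents EG v) (parents EH (\<phi> v)))"

(* Each fibre of a Euclidean bundle is
   modelled as a linear subspace of a fixed Euclidean space (so it is a
   finite-dimensional real inner product space).  The product
   \<Prod>_{u \<in> B(-,v)} Z_(u,v) is modelled by functions 'b \<Rightarrow> 'z whose value at each
   parent a of v lies in Z_(a,v) (values at non-parents are irrelevant). *)
record ('b, 'y, 'z, 'w) pmod =
  VB :: "'b set"
  EB :: "('b \<times> 'b) set"
  IB :: "'b set"
  TB :: "'b set"
  Yb :: "'b \<Rightarrow> 'y set"
  Zb :: "'b \<times> 'b \<Rightarrow> 'z set"
  Wb :: "'b \<times> 'b \<Rightarrow> 'w set"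
  Mb :: "'b \<times> 'b \<Rightarrow> 'w \<Rightarrow> 'y \<Rightarrow> 'z"
  sig :: "'b \<Rightarrow> ('b \<Rightarrow> 'z) \<Rightarrow> 'y"

definition perceptron_module ::
  "('b, 'y::euclidean_space, 'z::euclidean_space, 'w::euclidean_space) pmod \<Rightarrow> bool" where
  "perceptron_module B \<longleftrightarrow>
     is_dag (VB B) (EB B) \<and>
     IB B \<subseteq> VB B \<and> (\<forall>v\<in>IB B. parents (EB B) v = {}) \<and>
     TB B \<subseteq> VB B \<and>
     (\<forall>v\<in>VB B. subspace (Yb B v)) \<and>
     (\<forall>e\<in>EB B. subspace (Zb B e) \<and> subspace (Wb B e)) \<and>
     (\<forall>u v. (u, v) \<in> EB B \<longrightarrow>
        (\<forall>w y. w \<in> Wb B (u, v) \<longrightarrow> y \<in> Yb B u \<longrightarrow> Mb B (u, v) w y \<in> Zb B (u, v))) \<and>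
     (\<forall>v\<in>VB B - IB B. \<forall>g. (\<forall>a\<in>parents (EB B) v. g a \<in> Zb B (a, v))
        \<longrightarrow> sig B v g \<in> Yb B v)"

definition lift_pmod ::
  "('b, 'y, 'z, 'w) pmod \<Rightarrow> 'c set \<Rightarrow> ('c \<Rightarrow> 'b) \<Rightarrow>
   'g set \<Rightarrow> ('g \<times> 'g) set \<Rightarrow> ('g \<Rightarrow> 'b) \<Rightarrow> ('g \<Rightarrow> 'c) \<Rightarrow> bool" where
  "lift_pmod B C p V E \<pi> c \<longleftrightarrow>
     is_graph V E \<and> graph_hom V E (VB B) (EB B) \<pi> \<and>
     (\<forall>v\<in>V. \<pi> v \<in> IB B \<longrightarrow> c v \<in> C \<and> p (c v) = \<pi> v) \<and>
     inj_on c {v\<in>V. \<pi> v \<in> IB B}"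

definition param ::
  "('b, 'y, 'z, 'w) pmod \<Rightarrow> ('g \<times> 'g) set \<Rightarrow> ('g \<Rightarrow> 'b) \<Rightarrow> ('g \<times> 'g \<Rightarrow> 'w) set" where
  "param B E \<pi> = {w. \<forall>u v. (u, v) \<in> E \<longrightarrow> w (u, v) \<in> Wb B (\<pi> u, \<pi> v)}"

(* Forward function F_G(w, x), defined by well-founded recursion along the
   edge relation of G (G is acyclic since \<pi> maps it to the DAG B). *)
definition forward ::
  "('b, 'y, 'z::comm_monoid_add, 'w) pmod \<Rightarrow> ('g \<times> 'g) set \<Rightarrow> ('g \<Rightarrow> 'b) \<Rightarrow> ('g \<Rightarrow> 'c) \<Rightarrow>
   ('g \<times> 'g \<Rightarrow> 'w) \<Rightarrow> ('c \<Rightarrow> 'y) \<Rightarrow> 'g \<Rightarrow> 'y" where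
  "forward B E \<pi> c w x = wfrec E (\<lambda>f v.
     if \<pi> v \<in> IB B then x (c v)
     else sig B (\<pi> v) (\<lambda>a. if a \<in> parents (EB B) (\<pi> v)
        then (\<Sum>u\<in>{u\<in>parents E v. \<pi> u = a}. Mb B (\<pi> u, \<pi> v) (w (u, v)) (f u))
        else 0))"

definition lifted_morphism ::
  "('b, 'y, 'z, 'w) pmod \<Rightarrow>
   'g set \<Rightarrow> ('g \<times> 'g) set \<Rightarrow> ('g \<Rightarrow> 'b) \<Rightarrow> ('g \<Rightarrow> 'c) \<Rightarrow>
   'h set \<Rightarrow> ('h \<times> 'h) set \<Rightarrow> ('h \<Rightarrow> 'b) \<Rightarrow> ('h \<Rightarrow> 'c) \<Rightarrow> ('g \<Rightarrow> 'h) \<Rightarrow> bool" where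
  "lifted_morphism B VG EG \<pi>G cG VH EH \<pi>H cH \<phi> \<longleftrightarrow>
     fibration VG EG VH EH \<phi> \<and>
     (\<forall>v\<in>VG. \<pi>G v = \<pi>H (\<phi> v)) \<and>
     (\<forall>v\<in>VG. \<pi>G v \<in> IB B \<longrightarrow> cG v = cH (\<phi> v))"

end

theory Submission
  imports Defs
begin

lemma hom_trancl:
  assumes "\<forall>u v. (u, v) \<in> E \<longrightarrow> (f u, f v) \<in> F" and "(a, b) \<in> E\<^sup>+"
  shows "(f a, f b) \<in> F\<^sup>+"
  using assms(2)
proof (induction rule: trancl_induct)
  case (base y) then show ?case using assms(1) by blast
next
  case (step y z) then show ?case using assms(1) by (meson trancl.trancl_into_trancl)
qed

lemma lift_wf:
  assumes "perceptron_module B" "lift_pmod B C p V E \<pi> c"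
  shows "wf E"
proof -
  have g: "is_graph V E" and h: "graph_hom V E (VB B) (EB B) \<pi>"
    using assms(2) unfolding lift_pmod_def by auto
  have fin: "finite E" using g unfolding is_graph_def by (meson finite_SigmaI finite_subset)
  have ac: "acyclic (EB B)" using assms(1) unfolding perceptron_module_def is_dag_def by auto
  have "acyclic E"
    unfolding acyclic_def
  proof
    fix v show "(v, v) \<notin> E\<^sup>+"
    proof
      assume "(v, v) \<in> E\<^sup>+"
      then have "(\<pi> v, \<pi> v) \<in> (EB B)\<^sup>+"
        using hom_trancl[of E \<pi> "EB B"] h unfolding graph_hom_def by blast
      then show False using ac unfolding acyclic_def by blast
    qed
  qed
  then show ?thesis using fin finite_acyclic_wf by blast
qed

theorem proposition3:
  fixes B :: "('b, 'y::euclidean_space, 'z::euclidean_space, 'w::euclidean_space) pmod"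
    and C :: "'c set" and p :: "'c \<Rightarrow> 'b"
    and VG :: "'g set" and EG :: "('g \<times> 'g) set" and \<pi>G :: "'g \<Rightarrow> 'b" and cG :: "'g \<Rightarrow> 'c"
    and VH :: "'h set" and EH :: "('h \<times> 'h) set" and \<pi>H :: "'h \<Rightarrow> 'b" and cH :: "'h \<Rightarrow> 'c"
    and \<phi> :: "'g \<Rightarrow> 'h"
    and wG :: "'g \<times> 'g \<Rightarrow> 'w" and wH :: "'h \<times> 'h \<Rightarrow> 'w" and x :: "'c \<Rightarrow> 'y"
  assumes "perceptron_module B"
    and "finite C" and "\<forall>u\<in>C. p u \<in> IB B"
    and "lift_pmod B C p VG EG \<pi>G cG"
    and "lift_pmod B C p VH EH \<pi>H cH"
    and "lifted_morphism B VG EG \<pi>G cG VH EH \<pi>H cH \<phi>"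
    and "wG \<in> param B EG \<pi>G" and "wH \<in> param B EH \<pi>H"
    and "\<forall>u v. (u, v) \<in> EG \<longrightarrow> wG (u, v) = wH (\<phi> u, \<phi> v)"
    and "\<forall>u\<in>C. x u \<in> Yb B (p u)"
  shows "\<forall>v\<in>VG. forward B EG \<pi>G cG wG x v = forward B EH \<pi>H cH wH x (\<phi> v)"
proof -
  have wfG: "wf EG" using lift_wf assms(1,4) by blast
  have wfH: "wf EH" using lift_wf assms(1,5) by blast
  have EGsub: "EG \<subseteq> VG \<times> VG" using assms(4) unfolding lift_pmod_def is_graph_def by auto
  have fib: "fibration VG EG VH EH \<phi>" and piphi: "\<forall>v\<in>VG. \<pi>G v = \<pi>H (\<phi> v)"
    and cphi: "\<forall>v\<in>VG. \<pi>G v \<in> IB B \<longrightarrow> cG v = cH (\<phi> v)"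
    using assms(6) unfolding lifted_morphism_def by auto
  have bij: "\<forall>v\<in>VG. bij_betw \<phi> (parents EG v) (parents EH (\<phi> v))"
    using fib unfolding fibration_def by auto
  define FG where "FG = forward B EG \<pi>G cG wG x"
  define FH where "FH = forward B EH \<pi>H cH wH x"
  have FGeq: "FG v = (if \<pi>G v \<in> IB B then x (cG v)
     else sig B (\<pi>G v) (\<lambda>a. if a \<in> parents (EB B) (\<pi>G v)
        then (\<Sum>u\<in>{u\<in>parents EG v. \<pi>G u = a}. Mb B (\<pi>G u, \<pi>G v) (wG (u, v)) (FG u))
        else 0))" for v
    unfolding FG_def forward_def
    apply (subst wfrec[OF wfG])
    apply (rule if_cong[OF refl refl])
    apply (rule arg_cong[where f="sig B _"])
    apply (rule ext)
    apply (rule if_cong[OF refl _ refl])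
    apply (rule sum.cong[OF refl])
    apply (simp add: cut_apply parents_def)
    done
  have FHeq: "FH v = (if \<pi>H v \<in> IB B then x (cH v)
     else sig B (\<pi>H v) (\<lambda>a. if a \<in> parents (EB B) (\<pi>H v)
        then (\<Sum>u\<in>{u\<in>parents EH v. \<pi>H u = a}. Mb B (\<pi>H u, \<pi>H v) (wH (u, v)) (FH u))
        else 0))" for v
    unfolding FH_def forward_def
    apply (subst wfrec[OF wfH])
    apply (rule if_cong[OF refl refl])
    apply (rule arg_cong[where f="sig B _"])
    apply (rule ext)
    apply (rule if_cong[OF refl _ refl])
    apply (rule sum.cong[OF refl])
    apply (simp add: cut_apply parents_def)
    done
  have "v \<in> VG \<longrightarrow> FG v = FH (\<phi> v)" for v
    using wfG
  proof (induction v rule: wf_induct_rule)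
    case (less v)
    show ?case
    proof
      assume vV: "v \<in> VG"
      show "FG v = FH (\<phi> v)"
      proof (cases "\<pi>G v \<in> IB B")
        case True
        then show ?thesis using FGeq[of v] FHeq[of "\<phi> v"] piphi cphi vV by simp
      next
        case False
        have sums: "(\<Sum>u\<in>{u\<in>parents EG v. \<pi>G u = a}. Mb B (\<pi>G u, \<pi>G v) (wG (u, v)) (FG u))
            = (\<Sum>u\<in>{u\<in>parents EH (\<phi> v). \<pi>H u = a}. Mb B (\<pi>H u, \<pi>H (\<phi> v)) (wH (u, \<phi> v)) (FH u))"
          for a
        proof -
          have b: "bij_betw \<phi> (parents EG v) (parents EH (\<phi> v))" using bij vV by auto
          have pv: "u \<in> parents EG v \<Longrightarrow> u \<in> VG" for u
            using EGsub unfolding parents_def by auto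
          have bb: "bij_betw \<phi> {u \<in> parents EG v. \<pi>G u = a} {u \<in> parents EH (\<phi> v). \<pi>H u = a}"
            using b pv piphi unfolding bij_betw_def inj_on_def
            by (auto simp: image_iff) (metis (no_types, lifting) imageE)
          have "(\<Sum>u\<in>{u\<in>parents EH (\<phi> v). \<pi>H u = a}. Mb B (\<pi>H u, \<pi>H (\<phi> v)) (wH (u, \<phi> v)) (FH u))
             = (\<Sum>u\<in>{u\<in>parents EG v. \<pi>G u = a}. Mb B (\<pi>H (\<phi> u), \<pi>H (\<phi> v)) (wH (\<phi> u, \<phi> v)) (FH (\<phi> u)))"
            by (rule sum.reindex_bij_betw[OF bb, symmetric])
          also have "\<dots> = (\<Sum>u\<in>{u\<in>parents EG v. \<pi>G u = a}. Mb B (\<pi>G u, \<pi>G v) (wG (u, v)) (FG u))"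
          proof (rule sum.cong[OF refl])
            fix u assume "u \<in> {u \<in> parents EG v. \<pi>G u = a}"
            then have uE: "(u, v) \<in> EG" by (simp add: parents_def)
            then have uV: "u \<in> VG" using EGsub by auto
            show "Mb B (\<pi>H (\<phi> u), \<pi>H (\<phi> v)) (wH (\<phi> u, \<phi> v)) (FH (\<phi> u))
                = Mb B (\<pi>G u, \<pi>G v) (wG (u, v)) (FG u)"
              using less[OF uE] uV vV piphi assms(9) uE by simp
          qed
          finally show ?thesis by simp
        qed
        have pe: "\<pi>H (\<phi> v) = \<pi>G v" using piphi vV by simp
        show ?thesis
          apply (subst FGeq[of v])
          apply (subst FHeq[of "\<phi> v"])
          unfolding pe using False sums[unfolded pe] by (simp only: if_False)
      qed
    qed
  qed
  then show ?thesis unfolding FG_def FH_def by blast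
qed

end
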